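(* Let $\Omega$ be a topological space, $X$ a locally convex topological vector space with defining family of seminorms $\mathfrak{A}$, and $X_0$ a dense linear subspace of $X$. If $\Omega$ is paracompact and Hausdorff, or $X$ is separable, then for each $\epsilon > 0$, $p \in \mathfrak{A}$ and $f \in C(\Omega, X)$ there is $g \in C(\Omega, X_0)$ such that $\sup_{t\in\Omega} p(f(t) - g(t)) < \epsilon$. *)

theory Defs
  imports "HOL-Analysis.Analysis"
begin

definition seminorm :: "('b::real_vector \<Rightarrow> real) \<Rightarrow> bool" where
  "seminorm p \<longleftrightarrow>
     (\<forall>x y. p (x + y) \<le> p x + p y) \<and> (\<forall>c x. p (c *\<^sub>R x) = \<bar>c\<bar> * p x)"

definition seminorm_topology :: "('b::real_vector \<Rightarrow> real) set \<Rightarrow> 'b topology" where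
  "seminorm_topology \<A> = topology (\<lambda>U. \<forall>x\<in>U. \<exists>F r. finite F \<and> F \<subseteq> \<A> \<and> r > 0 \<and>
       {y. \<forall>p\<in>F. p (y - x) < r} \<subseteq> U)"

definition paracompact_space :: "'a topology \<Rightarrow> bool" where
  "paracompact_space T \<longleftrightarrow>
     (\<forall>\<U>. (\<forall>U\<in>\<U>. openin T U) \<and> topspace T \<subseteq> \<Union>\<U> \<longrightarrow>
        (\<exists>\<V>. (\<forall>V\<in>\<V>. openin T V) \<and> topspace T \<subseteq> \<Union>\<V> \<and>
             (\<forall>V\<in>\<V>. \<exists>U\<in>\<U>. V \<subseteq> U) \<and> locally_finite_in T \<V>))"

end

theory Submission
  imports Defs
begin

lemma seminorm_0: "seminorm p \<Longrightarrow> p 0 = 0"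
proof -
  assume "seminorm p"
  then have "p (0 *\<^sub>R 0) = \<bar>0\<bar> * p 0" unfolding seminorm_def by blast
  then show ?thesis by simp
qed

lemma seminorm_neg: "seminorm p \<Longrightarrow> p (- x) = p x"
proof -
  assume "seminorm p"
  then have "p ((-1) *\<^sub>R x) = \<bar>-1\<bar> * p x" unfolding seminorm_def by blast
  then show ?thesis by simp
qed

lemma seminorm_nonneg: "seminorm p \<Longrightarrow> p x \<ge> 0"
proof -
  assume s: "seminorm p"
  have "p (x + - x) \<le> p x + p (- x)" using s unfolding seminorm_def by blast
  then show ?thesis using seminorm_0[OF s] seminorm_neg[OF s] by simp
qed

lemma seminorm_add: "seminorm p \<Longrightarrow> p (x + y) \<le> p x + p y"
  unfolding seminorm_def by blast

lemma seminorm_scale: "seminorm p \<Longrightarrow> p (c *\<^sub>R x) = \<bar>c\<bar> * p x"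
  unfolding seminorm_def by blast

lemma seminorm_diff_sym: "seminorm p \<Longrightarrow> p (x - y) = p (y - x)"
  by (metis minus_diff_eq seminorm_neg)

lemma seminorm_tri: "seminorm p \<Longrightarrow> p (x - z) \<le> p (x - y) + p (y - z)"
proof -
  assume "seminorm p"
  then have "p ((x - y) + (y - z)) \<le> p (x - y) + p (y - z)" by (rule seminorm_add)
  then show ?thesis by simp
qed

lemma seminorm_sum: "seminorm p \<Longrightarrow> p (sum f S) \<le> (\<Sum>i\<in>S. p (f i))"
proof (induction S rule: infinite_finite_induct)
  case (infinite A) then show ?case by (simp add: seminorm_0)
next
  case empty then show ?case by (simp add: seminorm_0)
next
  case (insert x F)
  then show ?case using seminorm_add[OF insert.prems, of "f x" "sum f F"] by simp
qed

lemma istopology_seminorm: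
  fixes \<A> :: "('a::real_vector \<Rightarrow> real) set"
  shows
  "istopology (\<lambda>U. \<forall>x\<in>U. \<exists>F r. finite F \<and> F \<subseteq> \<A> \<and> r > 0 \<and>
       {y. \<forall>p\<in>F. p (y - x) < r} \<subseteq> U)"
  unfolding istopology_def
proof (intro conjI allI impI)
  fix S T :: "'a set"
  assume a: "(\<forall>x\<in>S. \<exists>F r. finite F \<and> F \<subseteq> \<A> \<and> r > 0 \<and> {y. \<forall>p\<in>F. p (y - x) < r} \<subseteq> S)" 
     "(\<forall>x\<in>T. \<exists>F r. finite F \<and> F \<subseteq> \<A> \<and> r > 0 \<and> {y. \<forall>p\<in>F. p (y - x) < r} \<subseteq> T)"
  show "\<forall>x\<in>S \<inter> T. \<exists>F r. finite F \<and> F \<subseteq> \<A> \<and> r > 0 \<and> {y. \<forall>p\<in>F. p (y - x) < r} \<subseteq> S \<inter> T"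
  proof
    fix x assume x: "x \<in> S \<inter> T"
    have "\<exists>F r. finite F \<and> F \<subseteq> \<A> \<and> r > 0 \<and> {y. \<forall>p\<in>F. p (y - x) < r} \<subseteq> S"
      using a(1) IntD1[OF x] by (rule bspec)
    then obtain F1 r1 where 1: "finite F1" "F1 \<subseteq> \<A>" "r1 > 0" "{y. \<forall>p\<in>F1. p (y - x) < r1} \<subseteq> S"
      by meson
    have "\<exists>F r. finite F \<and> F \<subseteq> \<A> \<and> r > 0 \<and> {y. \<forall>p\<in>F. p (y - x) < r} \<subseteq> T"
      using a(2) IntD2[OF x] by (rule bspec)
    then obtain F2 r2 where 2: "finite F2" "F2 \<subseteq> \<A>" "r2 > 0" "{y. \<forall>p\<in>F2. p (y - x) < r2} \<subseteq> T"
      by (elim exE conjE)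
    have sub: "{y. \<forall>p\<in>F1 \<union> F2. p (y - x) < min r1 r2} \<subseteq> S \<inter> T"
    proof
      fix y assume "y \<in> {y. \<forall>p\<in>F1 \<union> F2. p (y - x) < min r1 r2}"
      then have "y \<in> {y. \<forall>p\<in>F1. p (y - x) < r1}" "y \<in> {y. \<forall>p\<in>F2. p (y - x) < r2}"
        by auto
      then show "y \<in> S \<inter> T" using 1(4) 2(4) by blast
    qed
    have P: "finite (F1 \<union> F2) \<and> F1 \<union> F2 \<subseteq> \<A> \<and> min r1 r2 > 0 \<and> {y. \<forall>p\<in>F1 \<union> F2. p (y - x) < min r1 r2} \<subseteq> S \<inter> T"
      using 1 2 sub by simp
    show "\<exists>F r. finite F \<and> F \<subseteq> \<A> \<and> r > 0 \<and> {y. \<forall>p\<in>F. p (y - x) < r} \<subseteq> S \<inter> T"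
      by (rule exI[of _ "F1 \<union> F2"], rule exI[of _ "min r1 r2"], rule P)
  qed
next
  fix K :: "'a set set"
  assume a: "\<forall>S\<in>K. \<forall>x\<in>S. \<exists>F r. finite F \<and> F \<subseteq> \<A> \<and> r > 0 \<and> {y. \<forall>p\<in>F. p (y - x) < r} \<subseteq> S"
  show "\<forall>x\<in>\<Union>K. \<exists>F r. finite F \<and> F \<subseteq> \<A> \<and> r > 0 \<and> {y. \<forall>p\<in>F. p (y - x) < r} \<subseteq> \<Union>K"
  proof
    fix x assume "x \<in> \<Union>K"
    then obtain S where S: "S \<in> K" "x \<in> S" by (rule UnionE)
    have "\<exists>F r. finite F \<and> F \<subseteq> \<A> \<and> r > 0 \<and> {y. \<forall>p\<in>F. p (y - x) < r} \<subseteq> S"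
      using bspec[OF a S(1)] S(2) by (rule bspec)
    then obtain F r where P: "finite F" "F \<subseteq> \<A>" "r > 0" "{y. \<forall>p\<in>F. p (y - x) < r} \<subseteq> S"
      by (elim exE conjE)
    have "{y. \<forall>p\<in>F. p (y - x) < r} \<subseteq> \<Union>K"
      using P(4) S(1) by (meson Union_upper subset_trans)
    then have "finite F \<and> F \<subseteq> \<A> \<and> r > 0 \<and> {y. \<forall>p\<in>F. p (y - x) < r} \<subseteq> \<Union>K"
      using P by simp
    then show "\<exists>F r. finite F \<and> F \<subseteq> \<A> \<and> r > 0 \<and> {y. \<forall>p\<in>F. p (y - x) < r} \<subseteq> \<Union>K"
      by (rule exI[of _ F, OF exI[of _ r]])
  qed
qed

lemma openin_seminorm_topology:
  fixes \<A> :: "('a::real_vector \<Rightarrow> real) set"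
  shows "openin (seminorm_topology \<A>) U \<longleftrightarrow> (\<forall>x\<in>U. \<exists>F r. finite F \<and> F \<subseteq> \<A> \<and> r > 0 \<and>
       {y. \<forall>p\<in>F. p (y - x) < r} \<subseteq> U)"
  unfolding seminorm_topology_def
  by (subst topology_inverse'[OF istopology_seminorm]) (rule refl)

lemma topspace_seminorm_topology [simp]:
  fixes \<A> :: "('a::real_vector \<Rightarrow> real) set"
  shows "topspace (seminorm_topology \<A>) = UNIV"
proof -
  have "{y::'a. \<forall>p\<in>{}. p (y - x) < 1} \<subseteq> UNIV" for x by simp
  then have "\<forall>x\<in>UNIV. \<exists>F r. finite F \<and> F \<subseteq> \<A> \<and> r > 0 \<and> {y::'a. \<forall>p\<in>F. p (y - x) < r} \<subseteq> UNIV"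
    by (intro ballI exI[of _ "{}"] exI[of _ 1]) auto
  then have "openin (seminorm_topology \<A>) UNIV"
    unfolding openin_seminorm_topology by simp
  then show ?thesis by (meson openin_subset top.extremum_uniqueI)
qed

lemma openin_seminorm_ball:
  fixes \<A> :: "('a::real_vector \<Rightarrow> real) set"
  assumes "seminorm p" "p \<in> \<A>"
  shows "openin (seminorm_topology \<A>) {y. p (y - z) < r}"
  unfolding openin_seminorm_topology
proof
  fix x assume x: "x \<in> {y. p (y - z) < r}"
  have sub: "{y. \<forall>q\<in>{p}. q (y - x) < r - p (x - z)} \<subseteq> {y. p (y - z) < r}"
  proof
    fix y assume "y \<in> {y. \<forall>q\<in>{p}. q (y - x) < r - p (x - z)}"
    then have "p (y - x) < r - p (x - z)" by simp
    moreover have "p (y - z) \<le> p (y - x) + p (x - z)" by (rule seminorm_tri[OF assms(1)])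
    ultimately show "y \<in> {y. p (y - z) < r}" by simp
  qed
  have "finite {p} \<and> {p} \<subseteq> \<A> \<and> r - p (x - z) > 0 \<and> {y. \<forall>q\<in>{p}. q (y - x) < r - p (x - z)} \<subseteq> {y. p (y - z) < r}"
    using sub x assms by simp
  then show "\<exists>F r'. finite F \<and> F \<subseteq> \<A> \<and> r' > 0 \<and> {y. \<forall>p\<in>F. p (y - x) < r'} \<subseteq> {y. p (y - z) < r}"
    by (rule exI[of _ "{p}", OF exI[of _ "r - p (x - z)"]])
qed

lemma continuous_map_seminorm:
  fixes \<A> :: "('a::real_vector \<Rightarrow> real) set"
  assumes q: "seminorm q" "q \<in> \<A>"
  shows "continuous_map (seminorm_topology \<A>) euclideanreal (\<lambda>y. q (y - z))"
  unfolding continuous_map_def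
proof (intro conjI allI impI)
  fix V :: "real set" assume "openin euclideanreal V"
  then have oV: "open V" by simp
  show "openin (seminorm_topology \<A>) {x \<in> topspace (seminorm_topology \<A>). q (x - z) \<in> V}"
    unfolding openin_seminorm_topology
  proof
    fix x assume "x \<in> {x \<in> topspace (seminorm_topology \<A>). q (x - z) \<in> V}"
    then have "q (x - z) \<in> V" by simp
    then obtain e where e: "e > 0" "\<And>w. dist w (q (x - z)) < e \<Longrightarrow> w \<in> V"
      using oV open_dist by metis
    have sub: "{y. \<forall>p\<in>{q}. p (y - x) < e} \<subseteq> {x \<in> topspace (seminorm_topology \<A>). q (x - z) \<in> V}"
    proof
      fix y assume "y \<in> {y. \<forall>p\<in>{q}. p (y - x) < e}"
      then have "q (y - x) < e" by simp
      moreover have "q (y - z) \<le> q (y - x) + q (x - z)" "q (x - z) \<le> q (x - y) + q (y - z)"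
        using seminorm_tri[OF q(1)] by auto
      moreover have "q (x - y) = q (y - x)" using seminorm_diff_sym[OF q(1)] by auto
      ultimately have "dist (q (y - z)) (q (x - z)) < e" by (simp add: dist_real_def)
      then show "y \<in> {x \<in> topspace (seminorm_topology \<A>). q (x - z) \<in> V}" using e by simp
    qed
    have "finite {q} \<and> {q} \<subseteq> \<A> \<and> e > 0 \<and> {y. \<forall>p\<in>{q}. p (y - x) < e} \<subseteq> {x \<in> topspace (seminorm_topology \<A>). q (x - z) \<in> V}"
      using sub e q by simp
    then show "\<exists>F r. finite F \<and> F \<subseteq> \<A> \<and> r > 0 \<and> {y. \<forall>p\<in>F. p (y - x) < r} \<subseteq> {x \<in> topspace (seminorm_topology \<A>). q (x - z) \<in> V}"
      by (rule exI[of _ "{q}", OF exI[of _ e]])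
  qed
qed simp

lemma continuous_map_into_seminorm:
  fixes \<A> :: "('b::real_vector \<Rightarrow> real) set" and h :: "'a \<Rightarrow> 'b"
  assumes sn: "\<forall>p\<in>\<A>. seminorm p"
    and ev: "\<And>t q e. t \<in> topspace X \<Longrightarrow> q \<in> \<A> \<Longrightarrow> e > 0 \<Longrightarrow> eventually (\<lambda>s. q (h s - h t) < e) (atin X t)"
  shows "continuous_map X (seminorm_topology \<A>) h"
  unfolding continuous_map_def
proof (intro conjI allI impI)
  fix U assume "openin (seminorm_topology \<A>) U"
  then have U: "\<forall>x\<in>U. \<exists>F r. finite F \<and> F \<subseteq> \<A> \<and> r > 0 \<and> {y. \<forall>p\<in>F. p (y - x) < r} \<subseteq> U"
    unfolding openin_seminorm_topology .
  show "openin X {x \<in> topspace X. h x \<in> U}"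
  proof (subst openin_subopen, intro ballI)
    fix t assume t: "t \<in> {x \<in> topspace X. h x \<in> U}"
    have "\<exists>F r. finite F \<and> F \<subseteq> \<A> \<and> r > 0 \<and> {y. \<forall>p\<in>F. p (y - h t) < r} \<subseteq> U"
      using U t by simp
    then obtain F r where F: "finite F" "F \<subseteq> \<A>" "r > 0" "{y. \<forall>p\<in>F. p (y - h t) < r} \<subseteq> U"
      by (elim exE conjE)
    have "\<forall>q\<in>F. eventually (\<lambda>s. q (h s - h t) < r) (atin X t)"
      using ev t F by auto
    then have "eventually (\<lambda>s. \<forall>q\<in>F. q (h s - h t) < r) (atin X t)"
      by (rule eventually_ball_finite[OF F(1)])
    then obtain T where T: "openin X T" "t \<in> T" "\<forall>s\<in>T - {t}. \<forall>q\<in>F. q (h s - h t) < r"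
      using t unfolding eventually_atin by auto
    have "T \<subseteq> {x \<in> topspace X. h x \<in> U}"
    proof
      fix s assume s: "s \<in> T"
      have "\<forall>q\<in>F. q (h s - h t) < r"
      proof (cases "s = t")
        case True
        then show ?thesis using F sn seminorm_0 by fastforce
      next
        case False
        then show ?thesis using T(3) s by simp
      qed
      then have "h s \<in> U" by (intro subsetD[OF F(4)]) simp
      then show "s \<in> {x \<in> topspace X. h x \<in> U}" using s openin_subset[OF T(1)] by auto
    qed
    then show "\<exists>T. openin X T \<and> t \<in> T \<and> T \<subseteq> {x \<in> topspace X. h x \<in> U}"
      using T(1,2) by (intro exI[of _ T] conjI)
  qed
qed simp

lemma assemble:
  fixes \<A> :: "('b::real_vector \<Rightarrow> real) set" and X0 :: "'b set" and f :: "'a \<Rightarrow> 'b"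
    and h :: "'i \<Rightarrow> 'a \<Rightarrow> real" and x :: "'i \<Rightarrow> 'b"
  assumes sn: "\<forall>p\<in>\<A>. seminorm p" and p: "p \<in> \<A>" and sub: "subspace X0"
    and hc: "\<And>i. i \<in> I \<Longrightarrow> continuous_map \<Omega> euclideanreal (h i)"
    and hnn: "\<And>i t. i \<in> I \<Longrightarrow> t \<in> topspace \<Omega> \<Longrightarrow> h i t \<ge> 0"
    and lf: "\<And>t. t \<in> topspace \<Omega> \<Longrightarrow> \<exists>W. openin \<Omega> W \<and> t \<in> W \<and> finite {i\<in>I. \<exists>s\<in>W. h i s \<noteq> 0}"
    and cov: "\<And>t. t \<in> topspace \<Omega> \<Longrightarrow> \<exists>i\<in>I. h i t \<noteq> 0"
    and xX0: "\<And>i. i \<in> I \<Longrightarrow> x i \<in> X0"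
    and close: "\<And>i t. i \<in> I \<Longrightarrow> t \<in> topspace \<Omega> \<Longrightarrow> h i t \<noteq> 0 \<Longrightarrow> p (f t - x i) < r"
  shows "\<exists>g. continuous_map \<Omega> (subtopology (seminorm_topology \<A>) X0) g \<and>
             (\<forall>t\<in>topspace \<Omega>. p (f t - g t) < r)"
proof -
  define J where "J t = {i\<in>I. h i t \<noteq> 0}" for t
  define D where "D t = (\<Sum>i\<in>J t. h i t)" for t
  define g where "g t = (\<Sum>i\<in>J t. (h i t / D t) *\<^sub>R x i)" for t
  have pn: "seminorm p" using sn p by simp
  have finJ: "finite (J t)" if t: "t \<in> topspace \<Omega>" for t
  proof -
    obtain W where W: "openin \<Omega> W" "t \<in> W" "finite {i\<in>I. \<exists>s\<in>W. h i s \<noteq> 0}"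
      using lf[OF t] by (elim exE conjE)
    have "J t \<subseteq> {i\<in>I. \<exists>s\<in>W. h i s \<noteq> 0}" unfolding J_def using W(2) by auto
    then show ?thesis using W(3) finite_subset by auto
  qed
  have Dpos: "D t > 0" if t: "t \<in> topspace \<Omega>" for t
  proof -
    obtain i where i: "i \<in> I" "h i t \<noteq> 0" using cov[OF t] by (elim bexE)
    have iJ: "i \<in> J t" using i unfolding J_def by simp
    have hp: "h i t > 0" using hnn[OF i(1) t] i(2) by simp
    have nn: "\<And>j. j \<in> J t \<Longrightarrow> h j t \<ge> 0" using hnn t unfolding J_def by simp
    show ?thesis unfolding D_def by (rule sum_pos2[of "J t" i "\<lambda>j. h j t", OF finJ[OF t] iJ hp nn])
  qed
  have Jne: "J t \<noteq> {}" if t: "t \<in> topspace \<Omega>" for t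
    using cov[OF t] unfolding J_def by auto
  have gX0: "g t \<in> X0" for t
    unfolding g_def
    by (rule subspace_sum[OF sub], rule subspace_scale[OF sub], rule xX0) (simp add: J_def)
  have approx: "p (f t - g t) < r" if t: "t \<in> topspace \<Omega>" for t
  proof -
    have s1: "(\<Sum>i\<in>J t. h i t / D t) = 1"
      using Dpos[OF t] by (simp add: sum_divide_distrib[symmetric] D_def)
    have "(\<Sum>i\<in>J t. (h i t / D t) *\<^sub>R f t) = (\<Sum>i\<in>J t. h i t / D t) *\<^sub>R f t"
      by (rule scaleR_sum_left[symmetric])
    then have ft: "f t = (\<Sum>i\<in>J t. (h i t / D t) *\<^sub>R f t)" using s1 by simp
    have "(\<Sum>i\<in>J t. (h i t / D t) *\<^sub>R (f t - x i)) = (\<Sum>i\<in>J t. (h i t / D t) *\<^sub>R f t - (h i t / D t) *\<^sub>R x i)"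
      by (simp add: scaleR_diff_right)
    also have "\<dots> = (\<Sum>i\<in>J t. (h i t / D t) *\<^sub>R f t) - g t"
      unfolding g_def by (rule sum_subtractf)
    finally have eq: "f t - g t = (\<Sum>i\<in>J t. (h i t / D t) *\<^sub>R (f t - x i))"
      using ft by simp
    have "p (f t - g t) \<le> (\<Sum>i\<in>J t. p ((h i t / D t) *\<^sub>R (f t - x i)))"
      unfolding eq by (rule seminorm_sum[OF pn])
    also have "\<dots> = (\<Sum>i\<in>J t. (h i t / D t) * p (f t - x i))"
    proof (rule sum.cong[OF refl])
      fix i assume "i \<in> J t"
      then have ge: "h i t / D t \<ge> 0" using hnn t Dpos[OF t] unfolding J_def by simp
      show "p ((h i t / D t) *\<^sub>R (f t - x i)) = (h i t / D t) * p (f t - x i)"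
        by (simp only: seminorm_scale[OF pn] abs_of_nonneg[OF ge])
    qed
    also have "\<dots> < (\<Sum>i\<in>J t. (h i t / D t) * r)"
    proof (rule sum_strict_mono[OF finJ[OF t] Jne[OF t]])
      fix i assume i: "i \<in> J t"
      then have c0: "h i t / D t > 0" using hnn[of i t] t Dpos[OF t] unfolding J_def by force
      have c1: "p (f t - x i) < r" using close[of i t] i t unfolding J_def by simp
      show "(h i t / D t) * p (f t - x i) < (h i t / D t) * r"
        by (rule mult_strict_left_mono[OF c1 c0])
    qed
    also have "\<dots> = (\<Sum>i\<in>J t. h i t / D t) * r" by (rule sum_distrib_right[symmetric])
    also have "\<dots> = r" using s1 by simp
    finally show ?thesis .
  qed
  have cont: "continuous_map \<Omega> (seminorm_topology \<A>) g"
  proof (rule continuous_map_into_seminorm[OF sn])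
    fix t q and e :: real
    assume t: "t \<in> topspace \<Omega>" and q: "q \<in> \<A>" and e: "e > 0"
    have qn: "seminorm q" using sn q by simp
    obtain W where W: "openin \<Omega> W" "t \<in> W" "finite {i\<in>I. \<exists>s\<in>W. h i s \<noteq> 0}"
      using lf[OF t] by (elim exE conjE)
    define K where "K = {i\<in>I. \<exists>s\<in>W. h i s \<noteq> 0}"
    have finK: "finite K" using W(3) unfolding K_def .
    define D' where "D' s = (\<Sum>i\<in>K. h i s)" for s
    define c where "c i s = h i s / D' s" for i s
    have JK: "J s \<subseteq> K" if "s \<in> W" for s using that unfolding J_def K_def by auto
    have DD: "D' s = D s" if "s \<in> W" for s
      unfolding D'_def D_def
      by (rule sum.mono_neutral_right[OF finK JK[OF that]]) (auto simp: J_def K_def)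
    have gG: "g s = (\<Sum>i\<in>K. c i s *\<^sub>R x i)" if "s \<in> W" for s
      unfolding g_def c_def DD[OF that]
      by (rule sum.mono_neutral_left[OF finK JK[OF that]]) (auto simp: J_def K_def)
    have D't: "D' t \<noteq> 0" using DD[OF W(2)] Dpos[OF t] by simp
    have lim: "((\<lambda>s. c i s) \<longlongrightarrow> c i t) (atin \<Omega> t)" if i: "i \<in> K" for i
    proof -
      have hl: "((\<lambda>s. h j s) \<longlongrightarrow> h j t) (atin \<Omega> t)" if "j \<in> K" for j
      proof -
        have "j \<in> I" using that unfolding K_def by simp
        then have "continuous_map \<Omega> euclideanreal (h j)" by (rule hc)
        then have "limitin euclideanreal (h j) (h j t) (atin \<Omega> t)"
          using t unfolding continuous_map_atin by simp
        then show ?thesis by (simp add: limitin_canonical_iff)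
      qed
      have "((\<lambda>s. D' s) \<longlongrightarrow> D' t) (atin \<Omega> t)"
        unfolding D'_def by (rule tendsto_sum) (rule hl)
      then show ?thesis unfolding c_def using hl[OF i] D't by (intro tendsto_divide) auto
    qed
    have "((\<lambda>s. \<Sum>i\<in>K. \<bar>c i s - c i t\<bar> * q (x i)) \<longlongrightarrow> (\<Sum>i\<in>K. \<bar>c i t - c i t\<bar> * q (x i))) (atin \<Omega> t)"
      by (intro tendsto_intros lim)
    then have "((\<lambda>s. \<Sum>i\<in>K. \<bar>c i s - c i t\<bar> * q (x i)) \<longlongrightarrow> 0) (atin \<Omega> t)" by simp
    then have ev1: "eventually (\<lambda>s. (\<Sum>i\<in>K. \<bar>c i s - c i t\<bar> * q (x i)) < e) (atin \<Omega> t)"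
      using e by (rule order_tendstoD(2))
    have ev2: "eventually (\<lambda>s. s \<in> W) (atin \<Omega> t)"
      unfolding eventually_atin using W(1,2) by (intro disjI2 exI[of _ W]) auto
    show "eventually (\<lambda>s. q (g s - g t) < e) (atin \<Omega> t)"
      using ev1 ev2
    proof (rule eventually_elim2)
      fix s assume lt: "(\<Sum>i\<in>K. \<bar>c i s - c i t\<bar> * q (x i)) < e" and s: "s \<in> W"
      have "g s - g t = (\<Sum>i\<in>K. (c i s - c i t) *\<^sub>R x i)"
        unfolding gG[OF s] gG[OF W(2)] by (simp add: sum_subtractf[symmetric] scaleR_diff_left)
      then have "q (g s - g t) \<le> (\<Sum>i\<in>K. q ((c i s - c i t) *\<^sub>R x i))"
        using seminorm_sum[OF qn] by simp
      also have "\<dots> = (\<Sum>i\<in>K. \<bar>c i s - c i t\<bar> * q (x i))"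
        using seminorm_scale[OF qn] by simp
      finally show "q (g s - g t) < e" using lt by simp
    qed
  qed
  have "continuous_map \<Omega> (subtopology (seminorm_topology \<A>) X0) g"
    using cont gX0 by (auto simp: continuous_map_in_subtopology)
  then show ?thesis using approx by (intro exI[of _ g] conjI ballI)
qed

lemma continuous_map_seminorm_comp:
  fixes \<A> :: "('b::real_vector \<Rightarrow> real) set"
  assumes "seminorm q" "q \<in> \<A>" "continuous_map \<Omega> (seminorm_topology \<A>) f"
  shows "continuous_map \<Omega> euclideanreal (\<lambda>t. q (f t - z))"
  using continuous_map_compose[OF assms(3) continuous_map_seminorm[OF assms(1,2), of z]]
  by (simp add: o_def)

lemma dense_approx:
  fixes \<A> :: "('b::real_vector \<Rightarrow> real) set"
  assumes "seminorm p" "p \<in> \<A>" "(seminorm_topology \<A>) closure_of S = UNIV" "e > 0"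
  shows "\<exists>y\<in>S. p (y - z) < e"
proof -
  have z: "z \<in> (seminorm_topology \<A>) closure_of S" using assms(3) by simp
  have o: "openin (seminorm_topology \<A>) {y. p (y - z) < e}" by (rule openin_seminorm_ball[OF assms(1,2)])
  have zin: "z \<in> {y. p (y - z) < e}" using seminorm_0[OF assms(1)] assms(4) by simp
  have "\<forall>T. z \<in> T \<and> openin (seminorm_topology \<A>) T \<longrightarrow> (\<exists>y. y \<in> S \<and> y \<in> T)"
    using z unfolding in_closure_of by (elim conjE)
  then have "\<exists>y. y \<in> S \<and> y \<in> {y. p (y - z) < e}"
    using zin o by (elim allE[of _ "{y. p (y - z) < e}"]) simp
  then show ?thesis by auto
qed

lemma separable_case:
  fixes \<Omega> :: "'a topology" and \<A> :: "('b::real_vector \<Rightarrow> real) set" and X0 :: "'b set"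
  assumes sn: "\<forall>p\<in>\<A>. seminorm p" and sub: "subspace X0"
    and dense: "(seminorm_topology \<A>) closure_of X0 = UNIV"
    and sep: "separable_space (seminorm_topology \<A>)"
    and r: "r > 0" and p: "p \<in> \<A>"
    and f: "continuous_map \<Omega> (seminorm_topology \<A>) f"
  shows "\<exists>g. continuous_map \<Omega> (subtopology (seminorm_topology \<A>) X0) g \<and>
             (\<forall>t\<in>topspace \<Omega>. p (f t - g t) < r)"
proof -
  have pn: "seminorm p" using sn p by simp
  obtain C where C: "countable C" "(seminorm_topology \<A>) closure_of C = UNIV"
    using sep unfolding separable_space_def by auto
  define e where "e n = from_nat_into C n" for n
  define xn where "xn n = (SOME y. y \<in> X0 \<and> p (y - e n) < r / 2)" for n
  have xn: "xn n \<in> X0 \<and> p (xn n - e n) < r / 2" for n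
  proof -
    have r2: "r / 2 > 0" using r by simp
    have "\<exists>y\<in>X0. p (y - e n) < r / 2" by (rule dense_approx[OF pn p dense r2])
    then have "\<exists>y. y \<in> X0 \<and> p (y - e n) < r / 2" by auto
    then show ?thesis unfolding xn_def by (rule someI_ex)
  qed
  have near: "\<exists>n. p (f t - xn n) < r" for t
  proof -
    obtain d where d: "d \<in> C" "p (d - f t) < r / 2"
      using dense_approx[OF pn p C(2), of "r/2" "f t"] r by auto
    obtain n where n: "e n = d" using from_nat_into_surj[OF C(1) d(1)] unfolding e_def by auto
    have "p (f t - xn n) \<le> p (f t - d) + p (d - xn n)" by (rule seminorm_tri[OF pn])
    also have "\<dots> = p (d - f t) + p (xn n - e n)" using seminorm_diff_sym[OF pn] n by metis
    also have "\<dots> < r" using d(2) xn[of n] by simp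
    finally show ?thesis by auto
  qed
  define \<phi> where "\<phi> n t = max 0 (r - p (f t - xn n))" for n t
  define \<psi> where "\<psi> n t = max 0 (\<phi> n t - real n * (\<Sum>k<n. \<phi> k t))" for n t
  have \<phi>c: "continuous_map \<Omega> euclideanreal (\<phi> n)" for n
    unfolding \<phi>_def by (intro continuous_intros continuous_map_seminorm_comp[OF pn p f])
  have \<psi>c: "continuous_map \<Omega> euclideanreal (\<psi> n)" for n
    unfolding \<psi>_def by (intro continuous_intros \<phi>c) auto
  have \<phi>nn: "\<phi> n t \<ge> 0" for n t unfolding \<phi>_def by simp
  have \<phi>le: "\<phi> n t \<le> r" for n t unfolding \<phi>_def using seminorm_nonneg[OF pn] r by simp
  have sumnn: "(\<Sum>k<n. \<phi> k t) \<ge> 0" for n t by (rule sum_nonneg) (rule \<phi>nn)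
  have \<psi>pos: "\<phi> n t > 0" if "\<psi> n t \<noteq> 0" for n t
  proof -
    have "\<phi> n t - real n * (\<Sum>k<n. \<phi> k t) > 0" using that unfolding \<psi>_def by (auto simp: max_def split: if_splits)
    moreover have "real n * (\<Sum>k<n. \<phi> k t) \<ge> 0" using sumnn by simp
    ultimately show ?thesis by linarith
  qed
  show ?thesis
  proof (rule assemble[OF sn p sub, where I=UNIV and h=\<psi> and \<Omega>=\<Omega> and x=xn and f=f and r=r])
    fix i assume "i \<in> (UNIV :: nat set)"
    show "continuous_map \<Omega> euclideanreal (\<psi> i)" by (rule \<psi>c)
  next
    fix i t show "0 \<le> \<psi> i t" unfolding \<psi>_def by simp
  next
    fix i :: nat show "xn i \<in> X0" using xn by simp
  next
    fix i t assume "\<psi> i t \<noteq> 0"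
    then have "\<phi> i t > 0" by (rule \<psi>pos)
    then show "p (f t - xn i) < r" unfolding \<phi>_def by (simp add: max_def split: if_splits)
  next
    fix t assume t: "t \<in> topspace \<Omega>"
    have ex: "\<exists>n. \<phi> n t > 0" using near[of t] unfolding \<phi>_def by (auto simp: less_max_iff_disj)
    define m where "m = (LEAST n. \<phi> n t > 0)"
    have m: "\<phi> m t > 0" unfolding m_def using ex by (rule LeastI_ex)
    have "\<phi> k t = 0" if "k < m" for k
      using not_less_Least[OF that[unfolded m_def]] \<phi>nn[of k t] by simp
    then have "(\<Sum>k<m. \<phi> k t) = 0" by simp
    then have "\<psi> m t = \<phi> m t" unfolding \<psi>_def using m by simp
    then show "\<exists>i\<in>UNIV. \<psi> i t \<noteq> 0" using m by (intro bexI[of _ m]) auto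
  next
    fix t assume t: "t \<in> topspace \<Omega>"
    obtain m where m: "\<phi> m t > 0" using near[of t] unfolding \<phi>_def by (auto simp: less_max_iff_disj)
    define a where "a = \<phi> m t"
    have a: "a > 0" using m a_def by simp
    define W where "W = {s \<in> topspace \<Omega>. \<phi> m s \<in> {a/2<..}}"
    have oW: "openin \<Omega> W" unfolding W_def
      by (rule openin_continuous_map_preimage[OF \<phi>c]) simp
    have tW: "t \<in> W" unfolding W_def a_def using t m by simp
    define N0 where "N0 = m + 1 + nat \<lceil>2 * r / a\<rceil>"
    have N0: "real N0 * (a / 2) \<ge> r"
    proof -
      have "real N0 \<ge> 2 * r / a" unfolding N0_def by linarith
      then have "real N0 * a \<ge> 2 * r" using a by (simp add: field_simps)
      then show ?thesis by simp
    qed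
    have "{i \<in> UNIV. \<exists>s\<in>W. \<psi> i s \<noteq> 0} \<subseteq> {..<N0}"
    proof (rule subsetI, rule ccontr)
      fix n assume n: "n \<in> {i \<in> UNIV. \<exists>s\<in>W. \<psi> i s \<noteq> 0}" and nN: "n \<notin> {..<N0}"
      then obtain s where s: "s \<in> W" "\<psi> n s \<noteq> 0" by auto
      have "n \<ge> N0" using nN by simp
      then have mn: "m < n" unfolding N0_def by simp
      have "\<phi> m s \<le> (\<Sum>k<n. \<phi> k s)"
        by (rule member_le_sum) (use mn \<phi>nn in auto)
      moreover have "\<phi> m s > a / 2" using s(1) unfolding W_def by simp
      ultimately have "(\<Sum>k<n. \<phi> k s) > a / 2" by simp
      moreover have "real n \<ge> real N0" using \<open>n \<ge> N0\<close> by simp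
      moreover have "real n > 0" using mn by simp
      ultimately have "real n * (\<Sum>k<n. \<phi> k s) > real n * (a / 2)"
        "real n * (a / 2) \<ge> real N0 * (a / 2)"
        using a by (auto intro: mult_strict_left_mono mult_right_mono)
      then have "real n * (\<Sum>k<n. \<phi> k s) > real N0 * (a / 2)" by linarith
      then have "real n * (\<Sum>k<n. \<phi> k s) > \<phi> n s" using N0 \<phi>le[of n s] by linarith
      then have "\<psi> n s = 0" unfolding \<psi>_def by simp
      then show False using s(2) by simp
    qed
    then have "finite {i \<in> UNIV. \<exists>s\<in>W. \<psi> i s \<noteq> 0}" by (rule finite_subset) simp
    then show "\<exists>W. openin \<Omega> W \<and> t \<in> W \<and> finite {i \<in> UNIV. \<exists>s\<in>W. \<psi> i s \<noteq> 0}"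
      using oW tW by (intro exI[of _ W] conjI)
  qed
qed

lemma para_sep:
  assumes P: "paracompact_space X" and C: "closedin X C" and K: "K \<subseteq> topspace X"
    and G: "\<And>y. y \<in> C \<Longrightarrow> \<exists>G. openin X G \<and> y \<in> G \<and> disjnt (X closure_of G) K"
  shows "\<exists>W. openin X W \<and> C \<subseteq> W \<and> disjnt (X closure_of W) K"
proof -
  define \<U> where "\<U> = insert (topspace X - C) {G. openin X G \<and> disjnt (X closure_of G) K}"
  have oU: "\<forall>U\<in>\<U>. openin X U" unfolding \<U>_def using C by auto
  have cU: "topspace X \<subseteq> \<Union>\<U>"
  proof
    fix t assume t: "t \<in> topspace X"
    show "t \<in> \<Union>\<U>"
    proof (cases "t \<in> C")
      case True
      then obtain G where G: "openin X G" "t \<in> G" "disjnt (X closure_of G) K" using G by meson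
      then have "G \<in> \<U>" unfolding \<U>_def by simp
      then show ?thesis using G(2) by (rule UnionI)
    next
      case False
      have "topspace X - C \<in> \<U>" unfolding \<U>_def by simp
      then show ?thesis by (rule UnionI) (use t False in simp)
    qed
  qed
  from P have "(\<forall>U\<in>\<U>. openin X U) \<and> topspace X \<subseteq> \<Union>\<U> \<longrightarrow>
        (\<exists>\<V>. (\<forall>V\<in>\<V>. openin X V) \<and> topspace X \<subseteq> \<Union>\<V> \<and>
             (\<forall>V\<in>\<V>. \<exists>U\<in>\<U>. V \<subseteq> U) \<and> locally_finite_in X \<V>)"
    unfolding paracompact_space_def by (rule spec)
  then have "\<exists>\<V>. (\<forall>V\<in>\<V>. openin X V) \<and> topspace X \<subseteq> \<Union>\<V> \<and>
             (\<forall>V\<in>\<V>. \<exists>U\<in>\<U>. V \<subseteq> U) \<and> locally_finite_in X \<V>"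
    using oU cU by simp
  then obtain \<V> where V: "\<forall>V\<in>\<V>. openin X V" "topspace X \<subseteq> \<Union>\<V>" "\<forall>V\<in>\<V>. \<exists>U\<in>\<U>. V \<subseteq> U"
    "locally_finite_in X \<V>"
    by (elim exE conjE)
  define \<V>C where "\<V>C = {V\<in>\<V>. V \<inter> C \<noteq> {}}"
  have lfC: "locally_finite_in X \<V>C" unfolding \<V>C_def by (rule locally_finite_in_subset[OF V(4)]) auto
  define W where "W = \<Union>\<V>C"
  have oW: "openin X W" unfolding W_def \<V>C_def using V(1) by auto
  have CW: "C \<subseteq> W"
  proof
    fix y assume y: "y \<in> C"
    then have "y \<in> topspace X" using C closedin_subset by auto
    then obtain V where hV: "V \<in> \<V>" "y \<in> V" using V(2) by auto
    then have "V \<in> \<V>C" unfolding \<V>C_def using y by auto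
    then show "y \<in> W" unfolding W_def using hV(2) by (rule UnionI)
  qed
  have clW: "X closure_of W = \<Union>((\<lambda>S. X closure_of S) ` \<V>C)"
    unfolding W_def by (rule closure_of_locally_finite_Union[OF lfC])
  have "disjnt (X closure_of V) K" if hV: "V \<in> \<V>C" for V
  proof -
    have "V \<in> \<V>" using hV unfolding \<V>C_def by simp
    then obtain U where U: "U \<in> \<U>" "V \<subseteq> U" using V(3) by auto
    have "V \<inter> C \<noteq> {}" using hV unfolding \<V>C_def by simp
    then have "U \<noteq> topspace X - C" using U(2) by auto
    then have "disjnt (X closure_of U) K" using U(1) unfolding \<U>_def by simp
    moreover have "X closure_of V \<subseteq> X closure_of U" using U(2) by (rule closure_of_mono)
    ultimately show ?thesis using disjnt_subset1 by auto
  qed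
  then have "disjnt (X closure_of W) K" unfolding clW by (auto simp: disjnt_def)
  then show ?thesis using oW CW by (intro exI[of _ W] conjI)
qed

lemma para_regular:
  assumes P: "paracompact_space X" and H: "Hausdorff_space X"
  shows "regular_space X"
  unfolding regular_space_def
proof (intro allI impI)
  fix C a assume Ca: "closedin X C \<and> a \<in> topspace X - C"
  have Cc: "closedin X C" and a: "a \<in> topspace X" "a \<notin> C" using Ca by auto
  have Gex: "\<exists>G. openin X G \<and> y \<in> G \<and> disjnt (X closure_of G) {a}" if y: "y \<in> C" for y
  proof -
    have yt: "y \<in> topspace X" using y Cc closedin_subset by auto
    have ay: "a \<noteq> y" using y a by auto
    have "\<exists>P G. openin X P \<and> openin X G \<and> a \<in> P \<and> y \<in> G \<and> disjnt P G"
      using H a(1) yt ay unfolding Hausdorff_space_def by simp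
    then obtain P G where PO: "openin X P" "openin X G" "a \<in> P" "y \<in> G" "disjnt P G"
      by (elim exE conjE)
    have "P \<inter> G = {}" using PO(5) by (simp add: disjnt_def)
    then have "P \<inter> X closure_of G = {}" using openin_Int_closure_of_eq_empty[OF PO(1)] by simp
    then have "disjnt (X closure_of G) {a}" using PO(3) by (auto simp: disjnt_def)
    then show ?thesis using PO by (intro exI[of _ G] conjI)
  qed
  have aT: "{a} \<subseteq> topspace X" using a by simp
  have "\<exists>W. openin X W \<and> C \<subseteq> W \<and> disjnt (X closure_of W) {a}"
    by (rule para_sep[OF P Cc aT]) (rule Gex)
  then obtain W where W: "openin X W" "C \<subseteq> W" "disjnt (X closure_of W) {a}"
    by (elim exE conjE)
  have "openin X (topspace X - X closure_of W)" by (simp add: openin_diff)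
  moreover have "a \<in> topspace X - X closure_of W" using W(3) a by (auto simp: disjnt_def)
  moreover have "disjnt (topspace X - X closure_of W) W"
    using closure_of_subset[OF openin_subset[OF W(1)]] by (auto simp: disjnt_def)
  ultimately show "\<exists>U V. openin X U \<and> openin X V \<and> a \<in> U \<and> C \<subseteq> V \<and> disjnt U V"
    using W by (intro exI[of _ "topspace X - X closure_of W"] exI[of _ W] conjI)
qed

lemma para_normal:
  assumes P: "paracompact_space X" and R: "regular_space X"
  shows "normal_space X"
  unfolding normal_space_def
proof (intro allI impI)
  fix S T assume ST: "closedin X S \<and> closedin X T \<and> disjnt S T"
  have Sc: "closedin X S" and Tc: "closedin X T" and dST: "disjnt S T" using ST by auto
  have Tt: "T \<subseteq> topspace X" using Tc closedin_subset by auto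
  have Gex: "\<exists>G. openin X G \<and> y \<in> G \<and> disjnt (X closure_of G) T" if y: "y \<in> S" for y
  proof -
    have "y \<in> topspace X - T" using y Sc closedin_subset dST by (auto simp: disjnt_def)
    then have "\<exists>G. openin X G \<and> y \<in> G \<and> disjnt T (X closure_of G)"
      using R Tc unfolding regular_space by simp
    then obtain G where "openin X G" "y \<in> G" "disjnt T (X closure_of G)"
      by (elim exE conjE)
    then show ?thesis by (intro exI[of _ G]) (auto simp: disjnt_sym)
  qed
  have "\<exists>W. openin X W \<and> S \<subseteq> W \<and> disjnt (X closure_of W) T"
    by (rule para_sep[OF P Sc Tt]) (rule Gex)
  then obtain W where W: "openin X W" "S \<subseteq> W" "disjnt (X closure_of W) T"
    by (elim exE conjE)
  have "openin X (topspace X - X closure_of W)" by (simp add: openin_diff)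
  moreover have "T \<subseteq> topspace X - X closure_of W" using W(3) Tt by (auto simp: disjnt_def)
  moreover have "disjnt W (topspace X - X closure_of W)"
    using closure_of_subset[OF openin_subset[OF W(1)]] by (auto simp: disjnt_def)
  ultimately show "\<exists>U V. openin X U \<and> openin X V \<and> S \<subseteq> U \<and> T \<subseteq> V \<and> disjnt U V"
    using W by (intro exI[of _ W] exI[of _ "topspace X - X closure_of W"] conjI)
qed

lemma paracompact_case:
  fixes \<Omega> :: "'a topology" and \<A> :: "('b::real_vector \<Rightarrow> real) set" and X0 :: "'b set"
  assumes sn: "\<forall>p\<in>\<A>. seminorm p" and sub: "subspace X0"
    and dense: "(seminorm_topology \<A>) closure_of X0 = UNIV"
    and P: "paracompact_space \<Omega>" and H: "Hausdorff_space \<Omega>"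
    and r: "r > 0" and p: "p \<in> \<A>"
    and f: "continuous_map \<Omega> (seminorm_topology \<A>) f"
  shows "\<exists>g. continuous_map \<Omega> (subtopology (seminorm_topology \<A>) X0) g \<and>
             (\<forall>t\<in>topspace \<Omega>. p (f t - g t) < r)"
proof -
  have pn: "seminorm p" using sn p by simp
  have R: "regular_space \<Omega>" by (rule para_regular[OF P H])
  have N: "normal_space \<Omega>" by (rule para_normal[OF P R])
  define B where "B x = {t \<in> topspace \<Omega>. p (f t - x) \<in> {..<r}}" for x
  define \<U> where "\<U> = B ` X0"
  have oU: "\<forall>U\<in>\<U>. openin \<Omega> U"
  proof
    fix U assume "U \<in> \<U>"
    then obtain x where Ux: "U = B x" unfolding \<U>_def by auto
    have "openin \<Omega> {t \<in> topspace \<Omega>. p (f t - x) \<in> {..<r}}"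
      by (rule openin_continuous_map_preimage[OF continuous_map_seminorm_comp[OF pn p f]]) simp
    then show "openin \<Omega> U" by (simp only: Ux B_def)
  qed
  have cU: "topspace \<Omega> \<subseteq> \<Union>\<U>"
  proof
    fix t assume t: "t \<in> topspace \<Omega>"
    have "\<exists>y\<in>X0. p (y - f t) < r" by (rule dense_approx[OF pn p dense r])
    then obtain y where y: "y \<in> X0" "p (y - f t) < r" by (elim bexE)
    then have "t \<in> B y" unfolding B_def using t seminorm_diff_sym[OF pn, of y "f t"] by simp
    moreover have "B y \<in> \<U>" unfolding \<U>_def using y(1) by simp
    ultimately show "t \<in> \<Union>\<U>" by (intro UnionI)
  qed
  from P have "(\<forall>U\<in>\<U>. openin \<Omega> U) \<and> topspace \<Omega> \<subseteq> \<Union>\<U> \<longrightarrow>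
        (\<exists>\<V>. (\<forall>V\<in>\<V>. openin \<Omega> V) \<and> topspace \<Omega> \<subseteq> \<Union>\<V> \<and>
             (\<forall>V\<in>\<V>. \<exists>U\<in>\<U>. V \<subseteq> U) \<and> locally_finite_in \<Omega> \<V>)"
    unfolding paracompact_space_def by (rule spec)
  then have "\<exists>\<V>. (\<forall>V\<in>\<V>. openin \<Omega> V) \<and> topspace \<Omega> \<subseteq> \<Union>\<V> \<and>
             (\<forall>V\<in>\<V>. \<exists>U\<in>\<U>. V \<subseteq> U) \<and> locally_finite_in \<Omega> \<V>"
    using oU cU by simp
  then obtain \<V> where V: "\<forall>V\<in>\<V>. openin \<Omega> V" "topspace \<Omega> \<subseteq> \<Union>\<V>" "\<forall>V\<in>\<V>. \<exists>U\<in>\<U>. V \<subseteq> U"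
    "locally_finite_in \<Omega> \<V>"
    by (elim exE conjE)
  define \<N> where "\<N> = {G. openin \<Omega> G \<and> (\<exists>V\<in>\<V>. \<Omega> closure_of G \<subseteq> V)}"
  have oN: "\<forall>U\<in>\<N>. openin \<Omega> U" unfolding \<N>_def by simp
  have cN: "topspace \<Omega> \<subseteq> \<Union>\<N>"
  proof
    fix t assume t: "t \<in> topspace \<Omega>"
    then obtain V where hV: "V \<in> \<V>" "t \<in> V" using V(2) by auto
    have "closedin \<Omega> (topspace \<Omega> - V)" using V(1) hV(1) by auto
    moreover have "t \<in> topspace \<Omega> - (topspace \<Omega> - V)" using t hV by simp
    ultimately have "\<exists>G. openin \<Omega> G \<and> t \<in> G \<and> disjnt (topspace \<Omega> - V) (\<Omega> closure_of G)"
      using R unfolding regular_space by simp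
    then obtain G where G: "openin \<Omega> G" "t \<in> G" "disjnt (topspace \<Omega> - V) (\<Omega> closure_of G)"
      by (elim exE conjE)
    have "\<Omega> closure_of G \<subseteq> V" using G(3) closure_of_subset_topspace[of \<Omega> G]
      by (auto simp: disjnt_def)
    then have "G \<in> \<N>" unfolding \<N>_def using G(1) hV(1) by auto
    then show "t \<in> \<Union>\<N>" using G(2) by (rule UnionI)
  qed
  from P have "(\<forall>U\<in>\<N>. openin \<Omega> U) \<and> topspace \<Omega> \<subseteq> \<Union>\<N> \<longrightarrow>
        (\<exists>\<W>. (\<forall>V\<in>\<W>. openin \<Omega> V) \<and> topspace \<Omega> \<subseteq> \<Union>\<W> \<and>
             (\<forall>V\<in>\<W>. \<exists>U\<in>\<N>. V \<subseteq> U) \<and> locally_finite_in \<Omega> \<W>)"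
    unfolding paracompact_space_def by (rule spec)
  then have "\<exists>\<W>. (\<forall>V\<in>\<W>. openin \<Omega> V) \<and> topspace \<Omega> \<subseteq> \<Union>\<W> \<and>
             (\<forall>V\<in>\<W>. \<exists>U\<in>\<N>. V \<subseteq> U) \<and> locally_finite_in \<Omega> \<W>"
    using oN cN by simp
  then obtain \<W> where W: "\<forall>V\<in>\<W>. openin \<Omega> V" "topspace \<Omega> \<subseteq> \<Union>\<W>" "\<forall>V\<in>\<W>. \<exists>U\<in>\<N>. V \<subseteq> U"
    "locally_finite_in \<Omega> \<W>"
    by (elim exE conjE)
  define F where "F V = \<Union>((\<lambda>S. \<Omega> closure_of S) ` {G\<in>\<W>. \<Omega> closure_of G \<subseteq> V})" for V
  have Fc: "closedin \<Omega> (F V)" for V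
    unfolding F_def
    by (rule closedin_Union_locally_finite_closure, rule locally_finite_in_subset[OF W(4)]) auto
  have FV: "F V \<subseteq> V" for V unfolding F_def by auto
  have Fcov: "\<exists>V\<in>\<V>. t \<in> F V" if t: "t \<in> topspace \<Omega>" for t
  proof -
    obtain G where G: "G \<in> \<W>" "t \<in> G" using W(2) t by auto
    then obtain U where U: "U \<in> \<N>" "G \<subseteq> U" using W(3) by auto
    then obtain V where hV: "V \<in> \<V>" "\<Omega> closure_of U \<subseteq> V" unfolding \<N>_def by auto
    have "\<Omega> closure_of G \<subseteq> \<Omega> closure_of U" using U(2) by (rule closure_of_mono)
    then have GV: "\<Omega> closure_of G \<subseteq> V" using hV(2) by simp
    have "t \<in> \<Omega> closure_of G"
      using closure_of_subset[OF openin_subset[of \<Omega> G]] W(1) G by auto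
    then have "t \<in> F V" unfolding F_def using G(1) GV by auto
    then show ?thesis using hV(1) by (intro bexI[of _ V])
  qed
  define u where "u V = (SOME u. continuous_map \<Omega> (top_of_set {0..1::real}) u \<and>
      u ` (topspace \<Omega> - V) \<subseteq> {0} \<and> u ` (F V) \<subseteq> {1})" for V
  have u: "continuous_map \<Omega> (top_of_set {0..1::real}) (u V) \<and>
      u V ` (topspace \<Omega> - V) \<subseteq> {0} \<and> u V ` (F V) \<subseteq> {1}" if hV: "V \<in> \<V>" for V
  proof -
    have c1: "closedin \<Omega> (topspace \<Omega> - V)" using V(1) hV by auto
    have d: "disjnt (topspace \<Omega> - V) (F V)" using FV[of V] by (auto simp: disjnt_def)
    obtain w where "continuous_map \<Omega> (top_of_set {0..1::real}) w"
      "w ` (topspace \<Omega> - V) \<subseteq> {0}" "w ` (F V) \<subseteq> {1}"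
      using Urysohn_lemma[OF N c1 Fc d, of 0 1] by auto
    then have "\<exists>w. continuous_map \<Omega> (top_of_set {0..1::real}) w \<and>
      w ` (topspace \<Omega> - V) \<subseteq> {0} \<and> w ` (F V) \<subseteq> {1}" by (intro exI[of _ w] conjI)
    then show ?thesis unfolding u_def by (rule someI_ex)
  qed
  define c where "c V = (SOME x. x \<in> X0 \<and> V \<subseteq> B x)" for V
  have c: "c V \<in> X0 \<and> V \<subseteq> B (c V)" if hV: "V \<in> \<V>" for V
  proof -
    obtain U where "U \<in> \<U>" "V \<subseteq> U" using V(3) hV by auto
    then obtain x where "x \<in> X0" "V \<subseteq> B x" unfolding \<U>_def by auto
    then have "\<exists>x. x \<in> X0 \<and> V \<subseteq> B x" by auto
    then show ?thesis unfolding c_def by (rule someI_ex)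
  qed
  have u0: "u V t = 0" if "V \<in> \<V>" "t \<in> topspace \<Omega>" "t \<notin> V" for V t
    using u[OF that(1)] that(2,3) by (auto simp: image_subset_iff)
  show ?thesis
  proof (rule assemble[OF sn p sub, where I=\<V> and h=u and \<Omega>=\<Omega> and x=c and f=f and r=r])
    fix V assume "V \<in> \<V>"
    then have "continuous_map \<Omega> (top_of_set {0..1::real}) (u V)" using u by simp
    then show "continuous_map \<Omega> euclideanreal (u V)"
      by (simp add: continuous_map_in_subtopology)
  next
    fix V t assume hV: "V \<in> \<V>" and t: "t \<in> topspace \<Omega>"
    have "u V ` topspace \<Omega> \<subseteq> topspace (top_of_set {0..1::real})"
      by (rule continuous_map_image_subset_topspace) (use u[OF hV] in simp)
    then have "u V t \<in> {0..1}" using t by (auto simp: image_subset_iff)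
    then show "0 \<le> u V t" by simp
  next
    fix V assume "V \<in> \<V>" then show "c V \<in> X0" using c by simp
  next
    fix V t assume hV: "V \<in> \<V>" and t: "t \<in> topspace \<Omega>" and nz: "u V t \<noteq> 0"
    have "t \<in> V" using u0[OF hV t] nz by (cases "t \<in> V") auto
    then have "t \<in> B (c V)" using c[OF hV] by auto
    then show "p (f t - c V) < r" unfolding B_def by simp
  next
    fix t assume t: "t \<in> topspace \<Omega>"
    obtain V where hV: "V \<in> \<V>" "t \<in> F V" using Fcov[OF t] by (elim bexE)
    then have "u V t = 1" using u[OF hV(1)] by (auto simp: image_subset_iff)
    then show "\<exists>V\<in>\<V>. u V t \<noteq> 0" using hV(1) by (intro bexI[of _ V]) auto
  next
    fix t assume t: "t \<in> topspace \<Omega>"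
    have "\<exists>G. openin \<Omega> G \<and> t \<in> G \<and> finite {U \<in> \<V>. U \<inter> G \<noteq> {}}"
      using V(4) t unfolding locally_finite_in_def by simp
    then obtain G where G: "openin \<Omega> G" "t \<in> G" "finite {U \<in> \<V>. U \<inter> G \<noteq> {}}"
      by (elim exE conjE)
    have "{V \<in> \<V>. \<exists>s\<in>G. u V s \<noteq> 0} \<subseteq> {U \<in> \<V>. U \<inter> G \<noteq> {}}"
    proof
      fix V assume "V \<in> {V \<in> \<V>. \<exists>s\<in>G. u V s \<noteq> 0}"
      then obtain s where s: "V \<in> \<V>" "s \<in> G" "u V s \<noteq> 0" by auto
      have "s \<in> topspace \<Omega>" using s(2) openin_subset[OF G(1)] by auto
      then have "s \<in> V" using u0[OF s(1)] s(3) by auto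
      then show "V \<in> {U \<in> \<V>. U \<inter> G \<noteq> {}}" using s by auto
    qed
    then have "finite {V \<in> \<V>. \<exists>s\<in>G. u V s \<noteq> 0}" using G(3) finite_subset by auto
    then show "\<exists>W. openin \<Omega> W \<and> t \<in> W \<and> finite {V \<in> \<V>. \<exists>s\<in>W. u V s \<noteq> 0}"
      using G(1,2) by (intro exI[of _ G] conjI)
  qed
qed

theorem theorem3p20:
  fixes \<Omega> :: "'a topology"
    and \<A> :: "('b::real_vector \<Rightarrow> real) set"
    and X\<^sub>0 :: "'b set"
  assumes seminorms: "\<forall>p\<in>\<A>. seminorm p"
    and sub: "subspace X\<^sub>0"
    and dense: "(seminorm_topology \<A>) closure_of X\<^sub>0 = UNIV"
    and alt: "(paracompact_space \<Omega> \<and> Hausdorff_space \<Omega>) \<or> separable_space (seminorm_topology \<A>)"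
    and eps: "\<epsilon> > 0"
    and p: "p \<in> \<A>"
    and f: "continuous_map \<Omega> (seminorm_topology \<A>) f"
  shows "\<exists>g. continuous_map \<Omega> (subtopology (seminorm_topology \<A>) X\<^sub>0) g \<and>
             (SUP t\<in>topspace \<Omega>. ereal (p (f t - g t))) < ereal \<epsilon>"
proof -
  have r: "\<epsilon> / 2 > 0" using eps by simp
  have "\<exists>g. continuous_map \<Omega> (subtopology (seminorm_topology \<A>) X\<^sub>0) g \<and>
             (\<forall>t\<in>topspace \<Omega>. p (f t - g t) < \<epsilon> / 2)"
    using alt
  proof
    assume "paracompact_space \<Omega> \<and> Hausdorff_space \<Omega>"
    then show ?thesis
      using paracompact_case[OF seminorms sub dense _ _ r p f] by blast
  next
    assume "separable_space (seminorm_topology \<A>)"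
    then show ?thesis
      using separable_case[OF seminorms sub dense _ r p f] by blast
  qed
  then obtain g where g: "continuous_map \<Omega> (subtopology (seminorm_topology \<A>) X\<^sub>0) g"
    "\<forall>t\<in>topspace \<Omega>. p (f t - g t) < \<epsilon> / 2"
    by (elim exE conjE)
  have "(SUP t\<in>topspace \<Omega>. ereal (p (f t - g t))) \<le> ereal (\<epsilon> / 2)"
    by (rule SUP_least) (use g(2) in auto)
  also have "\<dots> < ereal \<epsilon>" using eps by simp
  finally show ?thesis using g(1) by (intro exI[of _ g] conjI)
qed

end
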